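(* Let $\mathbf{H}$ be a finite commutative semihypergroup with states $e_1,\dots,e_n$ that is derived from a group. Then for each $i$, all diagonal entries of the matrix $A_i$ are equal: $a_{i,j}(j)=a_{i,i}(i)$ for all $i,j\in\{1,\dots,n\}$.
   Context: A finite commutative semihypergroup $\mathbf{H}$ with $n$ states $e_1,\dots,e_n$ is given by a convolution $e_i*e_j=\sum_{k=1}^n a_{i,j}(k)e_k$ ($i,j=1,\dots,n$), extended bilinearly, where $a_{i,j}(k)\ge 0$, $\sum_{k=1}^n a_{i,j}(k)=1$ for all $i,j$, the convolution is associative and commutative ($a_{i,j}(k)=a_{j,i}(k)$). Let $a_{i,j}\in\mathbb{R}^n$ denote the column vector $(a_{i,j}(1),\dots,a_{i,j}(n))^T$; let $A_i$ be the $n\times n$ matrix with columns $a_{i,1},\dots,a_{i,n}$ (so its $(k,j)$ entry is $a_{i,j}(k)$) and $B_i$ the matrix with columns $a_{1,i},\dots,a_{n,i}$. $\mathbf{H}$ is called derived from a group if it satisfies condition (A): the set $\{a_{i,j}: 1\le i,j\le n\}$ contains exactly $n$ distinct vectors, and for each $i$ the columns of $A_i$ are linearly independent and the columns of $B_i$ are linearly independent. *)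

theory Defs
  imports Complex_Main
begin

text \<open>States e_1..e_n are indexed by a finite type 'n (n = CARD('n)).
  a i j k is the coefficient a_{i,j}(k) of e_k in e_i * e_j.\<close>

definition fin_comm_semihypergroup :: "('n::finite \<Rightarrow> 'n \<Rightarrow> 'n \<Rightarrow> real) \<Rightarrow> bool" where
  "fin_comm_semihypergroup a \<longleftrightarrow>
     (\<forall>i j k. a i j k \<ge> 0) \<and>
     (\<forall>i j. (\<Sum>k\<in>UNIV. a i j k) = 1) \<and>
     (\<forall>i j. a i j = a j i) \<and>
     (\<forall>i j k m. (\<Sum>l\<in>UNIV. a i j l * a l k m) = (\<Sum>l\<in>UNIV. a j k l * a i l m))"

definition lin_indep_family :: "('n::finite \<Rightarrow> 'n \<Rightarrow> real) \<Rightarrow> bool" where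
  "lin_indep_family v \<longleftrightarrow>
     (\<forall>c :: 'n \<Rightarrow> real. (\<forall>k. (\<Sum>j\<in>UNIV. c j * v j k) = 0) \<longrightarrow> (\<forall>j. c j = 0))"

text \<open>Condition (A). Columns of A_i are a_{i,1},...,a_{i,n}; columns of B_i are a_{1,i},...,a_{n,i}.\<close>
definition derived_from_group :: "('n::finite \<Rightarrow> 'n \<Rightarrow> 'n \<Rightarrow> real) \<Rightarrow> bool" where
  "derived_from_group a \<longleftrightarrow>
     card ((\<lambda>(i, j). a i j) ` UNIV) = card (UNIV :: 'n set) \<and>
     (\<forall>i. lin_indep_family (\<lambda>j. a i j)) \<and>
     (\<forall>i. lin_indep_family (\<lambda>j. a j i))"

end

theory Submission
  imports Defs
begin

lemma li_inj:
  fixes v :: "'n::finite \<Rightarrow> 'n \<Rightarrow> real"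
  assumes "lin_indep_family v"
  shows "inj v"
proof (rule injI, rule ccontr)
  fix p q assume e: "v p = v q" and ne: "p \<noteq> q"
  define c where "c = (\<lambda>j. (if j = p then 1 else 0) - (if j = q then 1 else (0::real)))"
  have "\<forall>k. (\<Sum>j\<in>UNIV. c j * v j k) = 0"
  proof
    fix k
    have "(\<Sum>j\<in>UNIV. c j * v j k) = (\<Sum>j\<in>UNIV. (if j = p then v j k else 0)) - (\<Sum>j\<in>UNIV. (if j = q then v j k else 0))"
    proof -
      have "\<And>j. c j * v j k = (if j = p then v j k else 0) - (if j = q then v j k else 0)"
        by (simp add: c_def left_diff_distrib)
      thus ?thesis by (simp add: sum_subtractf)
    qed
    also have "\<dots> = 0" using e by simp
    finally show "(\<Sum>j\<in>UNIV. c j * v j k) = 0" .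
  qed
  with assms have "c p = 0" unfolding lin_indep_family_def by blast
  with ne show False by (simp add: c_def)
qed

lemma main:
  fixes a :: "'n::finite \<Rightarrow> 'n \<Rightarrow> 'n \<Rightarrow> real"
  assumes H: "fin_comm_semihypergroup a"
    and D: "derived_from_group a"
  shows "a i j j = a i j' j'"
proof -
  have comm: "\<And>i j. a i j = a j i" and assoc: "\<And>i j k m. (\<Sum>l\<in>UNIV. a i j l * a l k m) = (\<Sum>l\<in>UNIV. a j k l * a i l m)"
    using H unfolding fin_comm_semihypergroup_def by blast+
  have li: "\<And>i. lin_indep_family (\<lambda>j. a i j)" and cardV: "card ((\<lambda>(i, j). a i j) ` UNIV) = card (UNIV :: 'n set)"
    using D unfolding derived_from_group_def by auto
  have injr: "\<And>i. inj (a i)" using li_inj[OF li] by (metis eta_contract_eq)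
  define V where "V = (\<lambda>(i, j). a i j) ` (UNIV :: ('n \<times> 'n) set)"
  have sub: "range (a j) \<subseteq> V" unfolding V_def by auto
  have "card (range (a j)) = card (UNIV :: 'n set)" using injr card_image by blast
  hence "range (a j) = V" using sub cardV unfolding V_def
    by (metis card_subset_eq finite_UNIV finite_imageI)
  hence ex: "\<And>k. \<exists>m. a j m = a j' k" unfolding V_def by (metis (no_types, lifting) case_prod_conv rangeE rangeI)
  define \<sigma> where "\<sigma> = (\<lambda>k. SOME m. a j m = a j' k)"
  have sig: "\<And>k. a j (\<sigma> k) = a j' k" unfolding \<sigma>_def using ex by (metis (mono_tags) someI_ex)
  have injs: "inj \<sigma>"
    by (rule injI) (metis sig injr injD)
  hence surjs: "surj \<sigma>" using finite_UNIV_inj_surj[of \<sigma>] by simp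
  have sj: "\<sigma> j = j'" using sig[of j] comm[of j' j] injr[of j] by (simp add: inj_eq)
  define x where "x = a i j"
  define y where "y = a i j'"
  define T where "T = (\<lambda>l. x (inv \<sigma> l))"
  have "\<forall>l. T l - y l = 0"
  proof -
    have "\<forall>k. (\<Sum>l\<in>UNIV. (T l - y l) * a j l k) = 0"
    proof
      fix m
      have r: "(\<Sum>l\<in>UNIV. T l * a j l m) = (\<Sum>k\<in>UNIV. T (\<sigma> k) * a j (\<sigma> k) m)"
        using sum.reindex[OF injs, of "\<lambda>l. T l * a j l m"] surjs by simp
      also have "\<dots> = (\<Sum>k\<in>UNIV. a i j k * a k j' m)"
        using sig injs by (simp add: T_def x_def comm[of j'])
      also have "\<dots> = (\<Sum>l\<in>UNIV. a j j' l * a i l m)" by (rule assoc)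
      also have "\<dots> = (\<Sum>l\<in>UNIV. a j' j l * a i l m)" by (simp add: comm[of j j'])
      also have "\<dots> = (\<Sum>l\<in>UNIV. a i j' l * a l j m)" by (rule assoc[symmetric])
      also have "\<dots> = (\<Sum>l\<in>UNIV. y l * a j l m)" by (simp add: y_def comm[of _ j])
      finally show "(\<Sum>l\<in>UNIV. (T l - y l) * a j l m) = 0"
        by (simp add: left_diff_distrib sum_subtractf)
    qed
    hence "\<forall>l. (\<lambda>l. T l - y l) l = 0" using li[of j] unfolding lin_indep_family_def
      by (rule_tac mp[OF spec[of _ "\<lambda>l. T l - y l"]]) auto
    thus ?thesis by simp
  qed
  hence "T j' = y j'" by simp
  moreover have "T j' = x j" using sj injs by (metis T_def inv_f_f)
  ultimately show ?thesis by (simp add: x_def y_def)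
qed

theorem corollary2:
  fixes a :: "'n::finite \<Rightarrow> 'n \<Rightarrow> 'n \<Rightarrow> real"
  assumes "fin_comm_semihypergroup a"
    and "derived_from_group a"
  shows "\<forall>i j. a i j j = a i i i"
  using main[OF assms] by blast

end
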